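(* Let $G=(V,E)$ be an undirected, unweighted graph with $n=|V|$ vertices. Let $\varepsilon\in(0,\frac{1}{18}]$ and suppose that $H$ is a $(1\pm\varepsilon)$-spectral sparsifier of $G$. Then $\widehat{H}$, the unweighted version of $H$, is an $\widetilde{O}(n^{2/3})$-spanner of $G$.
   Context: A $(1\pm\varepsilon)$-spectral sparsifier of $G$ is a weighted graph $H=(V,E_H,w)$ with $E_H\subseteq E$ and positive edge weights such that $(1-\varepsilon)L_H\preceq L_G\preceq(1+\varepsilon)L_H$, where $L_G=B_G^\top B_G$ is the Laplacian of $G$ ($B_G$ the edge–vertex incidence matrix), $L_H=B_H^\top W B_H$ with $W$ the diagonal matrix of edge weights, and $A\preceq B$ means $x^\top Ax\le x^\top Bx$ for all $x\in\mathbb{R}^n$. The unweighted version $\widehat{H}$ of $H$ is the graph $(V,E_H)$ with all edge weights set to $1$. A subgraph $K$ of $G$ is a $t$-spanner of $G$ if $d_K(u,v)\le t\cdot d_G(u,v)$ for all $u,v\in V$, where $d$ denotes shortest-path distance. $\widetilde{O}(f)$ means $f\cdot\mathrm{polylog}(n)$. *)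

theory Defs
  imports Complex_Main "HOL-Library.Extended_Real"
begin

definition simple_graph :: "'a set \<Rightarrow> 'a set set \<Rightarrow> bool" where
  "simple_graph V E \<longleftrightarrow> finite V \<and> (\<forall>e\<in>E. e \<subseteq> V \<and> card e = 2)"

text \<open>Weighted Laplacian matrix (entries indexed by vertices): L = B^T W B.
  For an unweighted graph take w = (\<lambda>_. 1).\<close>
definition laplacian :: "'a set set \<Rightarrow> ('a set \<Rightarrow> real) \<Rightarrow> 'a \<Rightarrow> 'a \<Rightarrow> real" where
  "laplacian E w u v =
     (if u = v then (\<Sum>e\<in>{e\<in>E. u \<in> e}. w e)
      else if {u, v} \<in> E then - w {u, v} else 0)"

definition quad_form :: "'a set \<Rightarrow> ('a \<Rightarrow> 'a \<Rightarrow> real) \<Rightarrow> ('a \<Rightarrow> real) \<Rightarrow> real" where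
  "quad_form V A x = (\<Sum>u\<in>V. \<Sum>v\<in>V. x u * A u v * x v)"

definition loewner_le :: "'a set \<Rightarrow> ('a \<Rightarrow> 'a \<Rightarrow> real) \<Rightarrow> ('a \<Rightarrow> 'a \<Rightarrow> real) \<Rightarrow> bool" where
  "loewner_le V A B \<longleftrightarrow> (\<forall>x. quad_form V A x \<le> quad_form V B x)"

definition spectral_sparsifier ::
  "real \<Rightarrow> 'a set \<Rightarrow> 'a set set \<Rightarrow> 'a set set \<Rightarrow> ('a set \<Rightarrow> real) \<Rightarrow> bool" where
  "spectral_sparsifier eps V E EH w \<longleftrightarrow>
     EH \<subseteq> E \<and> (\<forall>e\<in>EH. w e > 0) \<and>
     loewner_le V (\<lambda>u v. (1 - eps) * laplacian EH w u v) (laplacian E (\<lambda>_. 1)) \<and>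
     loewner_le V (laplacian E (\<lambda>_. 1)) (\<lambda>u v. (1 + eps) * laplacian EH w u v)"

definition is_walk :: "'a set set \<Rightarrow> 'a list \<Rightarrow> bool" where
  "is_walk E xs \<longleftrightarrow> xs \<noteq> [] \<and> (\<forall>i. Suc i < length xs \<longrightarrow> {xs ! i, xs ! Suc i} \<in> E)"

text \<open>Shortest-path distance (number of edges); \<infinity> if no path exists.\<close>
definition graph_dist :: "'a set set \<Rightarrow> 'a \<Rightarrow> 'a \<Rightarrow> ereal" where
  "graph_dist E u v =
     (INF xs \<in> {xs. is_walk E xs \<and> hd xs = u \<and> last xs = v}. ereal (real (length xs - 1)))"

definition is_spanner :: "real \<Rightarrow> 'a set \<Rightarrow> 'a set set \<Rightarrow> 'a set set \<Rightarrow> bool" where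
  "is_spanner t V E EK \<longleftrightarrow> EK \<subseteq> E \<and>
     (\<forall>u\<in>V. \<forall>v\<in>V. graph_dist EK u v \<le> ereal t * graph_dist E u v)"

end

theory Submission
  imports Defs
begin

definition eq :: "('a \<Rightarrow> real) \<Rightarrow> 'a set \<Rightarrow> real" where
  "eq x e = (\<Sum>u\<in>e. \<Sum>v\<in>e. x u * (if u = v then 1 else -1) * x v)"

lemma eq_pair: "a \<noteq> b \<Longrightarrow> eq x {a,b} = (x a - x b)^2"
  unfolding eq_def by (simp add: power2_eq_square algebra_simps)

lemma quad_form_scale: "quad_form V (\<lambda>u v. c * A u v) x = c * quad_form V A x"
  unfolding quad_form_def by (simp add: sum_distrib_left mult_ac)

lemma card2_eq: "card e = 2 \<Longrightarrow> u \<in> e \<Longrightarrow> v \<in> e \<Longrightarrow> u \<noteq> v \<Longrightarrow> e = {u,v}"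
  by (auto simp: card_2_iff)

lemma pair_filter: assumes H: "\<And>e. e \<in> E \<Longrightarrow> u\<in>e \<Longrightarrow> v\<in>e \<Longrightarrow> e = {u,v}"
  shows "{e\<in>E. u\<in>e \<and> v\<in>e} = (if {u,v}\<in>E then {{u,v}} else {})"
proof (rule set_eqI)
  fix e
  have "e \<in> {e\<in>E. u\<in>e \<and> v\<in>e} \<Longrightarrow> e \<in> (if {u,v}\<in>E then {{u,v}} else {})"
  proof -
    assume a: "e \<in> {e\<in>E. u\<in>e \<and> v\<in>e}"
    then have "e = {u,v}" using H by blast
    with a show ?thesis by simp
  qed
  moreover have "e \<in> (if {u,v}\<in>E then {{u,v}} else {}) \<Longrightarrow> e \<in> {e\<in>E. u\<in>e \<and> v\<in>e}"
    by (cases "{u,v}\<in>E") simp_all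
  ultimately show "e \<in> {e\<in>E. u\<in>e \<and> v\<in>e} \<longleftrightarrow> e \<in> (if {u,v}\<in>E then {{u,v}} else {})" by blast
qed

lemma lap_entry:
  assumes fin: "finite E" and c2: "\<forall>e\<in>E. card e = 2"
  shows "laplacian E w u v = (\<Sum>e\<in>E. w e * (if u\<in>e \<and> v\<in>e then (if u=v then 1 else -1) else 0))"
proof (cases "u = v")
  case True
  have "(\<Sum>e\<in>E. w e * (if u\<in>e \<and> v\<in>e then (if u=v then 1 else -1) else 0))
      = (\<Sum>e\<in>E. if u \<in> e then w e else 0)"
    using True by (intro sum.cong refl) auto
  also have "\<dots> = (\<Sum>e\<in>{e\<in>E. u\<in>e}. w e)"
    by (rule sum.inter_filter[OF fin, symmetric])
  finally show ?thesis unfolding laplacian_def using True by simp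
next
  case False
  have "(\<Sum>e\<in>E. w e * (if u\<in>e \<and> v\<in>e then (if u=v then 1 else -1) else 0))
      = (\<Sum>e\<in>E. if u\<in>e \<and> v\<in>e then - w e else 0)"
    using False by (intro sum.cong refl) auto
  also have "\<dots> = (\<Sum>e\<in>{e\<in>E. u\<in>e \<and> v\<in>e}. - w e)"
    by (rule sum.inter_filter[OF fin, symmetric])
  also have "\<dots> = - (\<Sum>e\<in>{e\<in>E. u\<in>e \<and> v\<in>e}. w e)"
    by (rule sum_negf)
  also have "{e\<in>E. u\<in>e \<and> v\<in>e} = (if {u,v}\<in>E then {{u,v}} else {})"
    by (rule pair_filter) (use c2 False in \<open>metis card2_eq\<close>)
  finally show ?thesis unfolding laplacian_def using False by (cases "{u,v} \<in> E") simp_all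
qed

lemma inner_restrict:
  assumes "finite V" "e \<subseteq> V"
  shows "(\<Sum>u\<in>V. \<Sum>v\<in>V. (x::'a\<Rightarrow>real) u * (if u\<in>e \<and> v\<in>e then c u v else 0) * x v)
       = (\<Sum>u\<in>e. \<Sum>v\<in>e. x u * c u v * x v)"
proof -
  have "(\<Sum>u\<in>V. \<Sum>v\<in>V. x u * (if u\<in>e \<and> v\<in>e then c u v else 0) * x v)
      = (\<Sum>u\<in>V. if u \<in> e then (\<Sum>v\<in>e. x u * c u v * x v) else 0)"
  proof (rule sum.cong[OF refl])
    fix u assume "u \<in> V"
    show "(\<Sum>v\<in>V. x u * (if u\<in>e \<and> v\<in>e then c u v else 0) * x v)
      = (if u \<in> e then (\<Sum>v\<in>e. x u * c u v * x v) else 0)"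
    proof (cases "u \<in> e")
      case True
      have "(\<Sum>v\<in>V. x u * (if u\<in>e \<and> v\<in>e then c u v else 0) * x v)
          = (\<Sum>v\<in>V. if v \<in> e then x u * c u v * x v else 0)"
        using True by (intro sum.cong) simp_all
      also have "\<dots> = (\<Sum>v\<in>V \<inter> e. x u * c u v * x v)"
        using assms by (simp add: sum.inter_restrict)
      finally show ?thesis using True assms by (simp add: Int_absorb1)
    qed simp
  qed
  also have "\<dots> = (\<Sum>u\<in>V \<inter> e. (\<Sum>v\<in>e. x u * c u v * x v))"
    using assms by (simp add: sum.inter_restrict)
  finally show ?thesis using assms by (simp add: Int_absorb1)
qed

lemma triple_swap: "(\<Sum>u\<in>A. \<Sum>v\<in>B. \<Sum>e\<in>C. f u v e) = (\<Sum>e\<in>C. \<Sum>u\<in>A. \<Sum>v\<in>B. f u v e)"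
proof -
  have "(\<Sum>u\<in>A. \<Sum>v\<in>B. \<Sum>e\<in>C. f u v e) = (\<Sum>u\<in>A. \<Sum>e\<in>C. \<Sum>v\<in>B. f u v e)"
    by (rule sum.cong[OF refl], rule sum.swap)
  also have "\<dots> = (\<Sum>e\<in>C. \<Sum>u\<in>A. \<Sum>v\<in>B. f u v e)" by (rule sum.swap)
  finally show ?thesis .
qed

lemma quad_lap:
  assumes fV: "finite V" and E: "\<forall>e\<in>E. e \<subseteq> V \<and> card e = 2"
  shows "quad_form V (laplacian E w) x = (\<Sum>e\<in>E. w e * eq x e)"
proof -
  have fE: "finite E" using E fV by (meson Pow_iff finite_Pow_iff rev_finite_subset subsetI)
  have c2': "\<forall>e\<in>E. card e = 2" using E by auto
  let ?M = "\<lambda>e u v. (if u\<in>e \<and> v\<in>e then (if u=v then 1 else -1) else 0) :: real"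
  have "quad_form V (laplacian E w) x = (\<Sum>u\<in>V. \<Sum>v\<in>V. \<Sum>e\<in>E. w e * (x u * ?M e u v * x v))"
    unfolding quad_form_def lap_entry[OF fE c2'] sum_distrib_left sum_distrib_right
    by (intro sum.cong refl) (simp add: mult_ac)
  also have "\<dots> = (\<Sum>e\<in>E. w e * (\<Sum>u\<in>V. \<Sum>v\<in>V. x u * ?M e u v * x v))"
    by (simp add: sum_distrib_left mult.assoc) (rule triple_swap)
  also have "\<dots> = (\<Sum>e\<in>E. w e * eq x e)"
  proof (rule sum.cong[OF refl])
    fix e assume "e \<in> E"
    then have "e \<subseteq> V" using E by auto
    then show "w e * (\<Sum>u\<in>V. \<Sum>v\<in>V. x u * ?M e u v * x v) = w e * eq x e"
      using inner_restrict[OF fV, of e x "\<lambda>u v. if u = v then 1 else -1"]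
      unfolding eq_def by simp
  qed
  finally show ?thesis .
qed

lemma sep_iff: "l a \<le> (l b::nat) \<Longrightarrow> (\<exists>p\<in>{a,b}. \<exists>q\<in>{a,b}. l p \<le> j \<and> j < l q) \<longleftrightarrow> (l a \<le> j \<and> j < l b)"
  by (simp; linarith)
lemma sep_set: "l a \<le> (l b::nat) \<Longrightarrow> {j\<in>J. \<exists>p\<in>{a,b}. \<exists>q\<in>{a,b}. l p \<le> j \<and> j < l q} = {j\<in>J. l a \<le> j \<and> j < l b}"
  using sep_iff[of l a b] by blast
lemma eqc:
  assumes "a \<noteq> b"
  shows "eq (\<lambda>z. if j < l z then 1 else 0) {a,b} = (if \<exists>p\<in>{a,b}. \<exists>q\<in>{a,b}. l p \<le> j \<and> (j::nat) < l q then 1 else 0)"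
  unfolding eq_pair[OF assms] by (cases "j < l a"; cases "j < l b"; simp)

definition sepc :: "('a \<Rightarrow> nat) \<Rightarrow> nat set \<Rightarrow> 'a set \<Rightarrow> nat" where
  "sepc l J e = card {j\<in>J. \<exists>p\<in>e. \<exists>q\<in>e. l p \<le> j \<and> j < l q}"

lemma eqF_ord:
  assumes "a \<noteq> b" "finite J" "l a \<le> l b"
  shows "eq (\<lambda>z. real (card {j\<in>J. j < l z})) {a,b} = (real (sepc l J {a,b}))^2"
proof -
  have "{j\<in>J. j < l b} = {j\<in>J. j < l a} \<union> {j\<in>J. l a \<le> j \<and> j < l b}"
    using assms(3) by auto
  moreover have "{j\<in>J. j < l a} \<inter> {j\<in>J. l a \<le> j \<and> j < l b} = {}" by auto
  ultimately have "card {j\<in>J. j < l b} = card {j\<in>J. j < l a} + card {j\<in>J. l a \<le> j \<and> j < l b}"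
    using assms(2) by (simp add: card_Un_disjoint)
  moreover have "sepc l J {a,b} = card {j\<in>J. l a \<le> j \<and> j < l b}"
    unfolding sepc_def sep_set[of l a b J, OF assms(3)] ..
  ultimately show ?thesis unfolding eq_pair[OF assms(1)]
    by (simp add: power2_commute)
qed

lemma eqF:
  assumes "a \<noteq> b" "finite J"
  shows "eq (\<lambda>z. real (card {j\<in>J. j < l z})) {a,b} = (real (sepc l J {a,b}))^2"
proof (cases "l a \<le> l b")
  case True then show ?thesis by (rule eqF_ord[OF assms])
next
  case False
  then have "l b \<le> l a" by simp
  then have h: "eq (\<lambda>z. real (card {j\<in>J. j < l z})) {b,a} = (real (sepc l J {b,a}))^2"
    using assms(1) by (intro eqF_ord[OF _ assms(2)]) auto
  have "{b,a} = {a,b}" by (rule insert_commute)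
  then show ?thesis using h by metis
qed

lemma sum_ind: "finite J \<Longrightarrow> (\<Sum>j\<in>J. if P j then 1 else 0) = real (card {j\<in>J. P j})"
  by (simp add: sum.inter_filter[symmetric])

lemma edge2: "card e = 2 \<Longrightarrow> \<exists>a b. e = {a,b} \<and> a \<noteq> b"
  by (simp add: card_2_iff)

definition layer :: "'a set \<Rightarrow> ('a \<Rightarrow> nat) \<Rightarrow> nat \<Rightarrow> 'a set" where
  "layer V l j = {a\<in>V. l a = j}"

definition Lset :: "'a set \<Rightarrow> ('a \<Rightarrow> nat) \<Rightarrow> real \<Rightarrow> nat set" where
  "Lset V l T = {j. real (card (layer V l j)) \<le> T}"

definition Jset :: "'a set \<Rightarrow> ('a \<Rightarrow> nat) \<Rightarrow> real \<Rightarrow> nat \<Rightarrow> nat set" where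
  "Jset V l T K = {j. j < K \<and> j \<in> Lset V l T \<and> Suc j \<in> Lset V l T \<and>
     ((Suc j < K \<and> Suc (Suc j) \<in> Lset V l T) \<or> (0 < j \<and> j - 1 \<in> Lset V l T))}"

lemma J_nb: "j \<in> Jset V l T K \<Longrightarrow> Suc j \<in> Jset V l T K \<or> (0 < j \<and> j - 1 \<in> Jset V l T K)"
proof -
  let ?L = "Lset V l T"
  assume j: "j \<in> Jset V l T K"
  then have jj: "j < K" "j \<in> ?L" "Suc j \<in> ?L"
    "(Suc j < K \<and> Suc (Suc j) \<in> ?L) \<or> (0 < j \<and> j - 1 \<in> ?L)"
    unfolding Jset_def by auto
  from jj(4) show ?thesis
  proof
    assume h: "Suc j < K \<and> Suc (Suc j) \<in> ?L"
    have "Suc j \<in> Jset V l T K" unfolding Jset_def using h jj by simp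
    then show ?thesis by simp
  next
    assume h: "0 < j \<and> j - 1 \<in> ?L"
    then have sj: "Suc (j - 1) = j" by simp
    have "j - 1 \<in> Jset V l T K" unfolding Jset_def using h jj sj by simp
    then show ?thesis using h by simp
  qed
qed

lemma J_L: "j \<in> Jset V l T K \<Longrightarrow> j \<in> Lset V l T \<and> Suc j \<in> Lset V l T"
  unfolding Jset_def by auto

lemma J_fin: "finite (Jset V l T K)"
  by (rule finite_subset[of _ "{..<K}"]) (auto simp: Jset_def)

lemma J_sub: "Jset V l T K \<subseteq> {..<K}"
  by (auto simp: Jset_def)

definition Ba where
  "Ba V l J a = {b\<in>V. \<exists>j\<in>J. l a \<le> j \<and> (\<forall>i\<in>J. l a \<le> i \<longrightarrow> j \<le> i) \<and> l b = Suc j}"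
definition Ab where
  "Ab V l J b = {a\<in>V. \<exists>j\<in>J. j < l b \<and> (\<forall>i\<in>J. i < l b \<longrightarrow> i \<le> j) \<and> l a = j}"

lemma card_Ba:
  assumes fV: "finite V" and T: "0 \<le> T"
  shows "real (card (Ba V l (Jset V l T K) a)) \<le> T"
proof (cases "Ba V l (Jset V l T K) a = {}")
  case True then show ?thesis using T by simp
next
  case False
  let ?J = "Jset V l T K"
  obtain b0 where "b0 \<in> Ba V l ?J a" using False by auto
  then obtain j0 where j0: "j0 \<in> ?J" "l a \<le> j0" "\<forall>i\<in>?J. l a \<le> i \<longrightarrow> j0 \<le> i"
    unfolding Ba_def by auto
  have "Ba V l ?J a \<subseteq> layer V l (Suc j0)"
  proof
    fix b assume "b \<in> Ba V l ?J a"
    then obtain j where j: "b \<in> V" "j \<in> ?J" "l a \<le> j" "\<forall>i\<in>?J. l a \<le> i \<longrightarrow> j \<le> i" "l b = Suc j"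
      unfolding Ba_def by auto
    have "j = j0" using j j0 by (meson le_antisym)
    then show "b \<in> layer V l (Suc j0)" using j unfolding layer_def by simp
  qed
  then have "card (Ba V l ?J a) \<le> card (layer V l (Suc j0))"
    by (rule card_mono[rotated]) (simp add: layer_def fV)
  moreover have "real (card (layer V l (Suc j0))) \<le> T"
    using J_L[OF j0(1)] unfolding Lset_def by simp
  ultimately show ?thesis by linarith
qed

lemma card_Ab:
  assumes fV: "finite V" and T: "0 \<le> T"
  shows "real (card (Ab V l (Jset V l T K) b)) \<le> T"
proof (cases "Ab V l (Jset V l T K) b = {}")
  case True then show ?thesis using T by simp
next
  case False
  let ?J = "Jset V l T K"
  obtain a0 where "a0 \<in> Ab V l ?J b" using False by auto
  then obtain j0 where j0: "j0 \<in> ?J" "j0 < l b" "\<forall>i\<in>?J. i < l b \<longrightarrow> i \<le> j0"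
    unfolding Ab_def by auto
  have "Ab V l ?J b \<subseteq> layer V l j0"
  proof
    fix a assume "a \<in> Ab V l ?J b"
    then obtain j where j: "a \<in> V" "j \<in> ?J" "j < l b" "\<forall>i\<in>?J. i < l b \<longrightarrow> i \<le> j" "l a = j"
      unfolding Ab_def by auto
    have "j = j0" using j j0 by (meson le_antisym)
    then show "a \<in> layer V l j0" using j unfolding layer_def by simp
  qed
  then have "card (Ab V l ?J b) \<le> card (layer V l j0)"
    by (rule card_mono[rotated]) (simp add: layer_def fV)
  moreover have "real (card (layer V l j0)) \<le> T"
    using J_L[OF j0(1)] unfolding Lset_def by simp
  ultimately show ?thesis by linarith
qed

lemma cover_ord:
  assumes ab: "a \<noteq> b" "a \<in> V" "b \<in> V" and ord: "l a \<le> l b"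
    and s1: "sepc l (Jset V l T K) {a,b} = 1"
  shows "{a,b} \<in> (\<Union>x\<in>V. (\<lambda>y. {x,y}) ` Ba V l (Jset V l T K) x) \<union> (\<Union>y\<in>V. (\<lambda>x. {x,y}) ` Ab V l (Jset V l T K) y)"
proof -
  let ?J = "Jset V l T K"
  have "card {j\<in>?J. l a \<le> j \<and> j < l b} = 1"
    using s1 unfolding sepc_def sep_set[of l a b ?J, OF ord] .
  then obtain j where jset: "{j\<in>?J. l a \<le> j \<and> j < l b} = {j}" by (rule card_1_singletonE)
  then have j: "j \<in> ?J" "l a \<le> j" "j < l b" by auto
  have uniq: "\<And>i. i \<in> ?J \<Longrightarrow> l a \<le> i \<Longrightarrow> i < l b \<Longrightarrow> i = j"
  proof -
    fix i assume "i \<in> ?J" "l a \<le> i" "i < l b"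
    then have "i \<in> {j\<in>?J. l a \<le> j \<and> j < l b}" by simp
    then show "i = j" using jset by simp
  qed
  from J_nb[OF j(1)] show ?thesis
  proof
    assume sj: "Suc j \<in> ?J"
    have "l b = Suc j"
    proof (rule ccontr)
      assume "l b \<noteq> Suc j"
      then have "Suc j < l b" using j by simp
      then have "Suc j = j" using uniq[OF sj] j by simp
      then show False by simp
    qed
    moreover have "\<forall>i\<in>?J. l a \<le> i \<longrightarrow> j \<le> i"
    proof (intro ballI impI)
      fix i assume "i \<in> ?J" "l a \<le> i"
      show "j \<le> i"
      proof (rule ccontr)
        assume "\<not> j \<le> i"
        then have "i < l b" using j by simp
        then have "i = j" using uniq \<open>i \<in> ?J\<close> \<open>l a \<le> i\<close> by simp
        then show False using \<open>\<not> j \<le> i\<close> by simp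
      qed
    qed
    ultimately have "b \<in> Ba V l ?J a" unfolding Ba_def using ab j by auto
    then have "{a,b} \<in> (\<lambda>y. {a,y}) ` Ba V l ?J a" by (rule imageI)
    then show ?thesis using ab(2) by (intro UnI1 UN_I)
  next
    assume pj: "0 < j \<and> j - 1 \<in> ?J"
    have "l a = j"
    proof (rule ccontr)
      assume "l a \<noteq> j"
      then have "l a \<le> j - 1" using j by simp
      moreover have "j - 1 < l b" using j by simp
      ultimately have "j - 1 = j" using uniq pj by simp
      then show False using pj by arith
    qed
    moreover have "\<forall>i\<in>?J. i < l b \<longrightarrow> i \<le> j"
    proof (intro ballI impI)
      fix i assume "i \<in> ?J" "i < l b"
      show "i \<le> j"
      proof (rule ccontr)
        assume "\<not> i \<le> j"
        then have "l a \<le> i" using j by simp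
        then have "i = j" using uniq \<open>i \<in> ?J\<close> \<open>i < l b\<close> by simp
        then show False using \<open>\<not> i \<le> j\<close> by simp
      qed
    qed
    ultimately have "a \<in> Ab V l ?J b" unfolding Ab_def using ab j by auto
    then have "{a,b} \<in> (\<lambda>x. {x,b}) ` Ab V l ?J b" by (rule imageI)
    then show ?thesis using ab(3) by (intro UnI2 UN_I)
  qed
qed

lemma sep_le1: assumes "l b \<le> l a + 1" "l a \<le> l b + 1"
  shows "sepc l J {a,b} \<le> 1"
proof -
  have "{j\<in>J. \<exists>p\<in>{a,b}. \<exists>q\<in>{a,b}. l p \<le> j \<and> j < l q} \<subseteq> {min (l a) (l b)}"
  proof
    fix j assume "j \<in> {j\<in>J. \<exists>p\<in>{a,b}. \<exists>q\<in>{a,b}. l p \<le> j \<and> j < l q}"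
    then have "(l a \<le> j \<and> j < l b) \<or> (l b \<le> j \<and> j < l a)" by auto
    then show "j \<in> {min (l a) (l b)}" using assms by auto
  qed
  then have "card {j\<in>J. \<exists>p\<in>{a,b}. \<exists>q\<in>{a,b}. l p \<le> j \<and> j < l q} \<le> card {min (l a) (l b)}"
    by (intro card_mono) simp_all
  then show ?thesis unfolding sepc_def by simp
qed

context
  fixes V :: "'a set" and E EH w eps and l :: "'a \<Rightarrow> nat"
  assumes fV: "finite V" and Eok: "\<forall>e\<in>E. e \<subseteq> V \<and> card e = 2" and EHE: "EH \<subseteq> E"
    and sp1: "\<And>x. (1-eps) * (\<Sum>e\<in>EH. w e * eq x e) \<le> (\<Sum>e\<in>E. eq x e)"
    and sp2: "\<And>x. (\<Sum>e\<in>E. eq x e) \<le> (1+eps) * (\<Sum>e\<in>EH. w e * eq x e)"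
    and lip: "\<And>a b. {a,b} \<in> EH \<Longrightarrow> l b \<le> l a + 1"
    and eps: "0 < eps" "eps \<le> 1/18"
begin

lemma fE: "finite E" using Eok fV by (meson Pow_iff finite_Pow_iff rev_finite_subset subsetI)
lemma fEH: "finite EH" using fE EHE finite_subset by blast

lemma main_ineq:
  assumes fJ: "finite J"
  shows "(1-eps) * (\<Sum>e\<in>E. (real (sepc l J e))^2) \<le> (1+eps) * (\<Sum>e\<in>E. real (sepc l J e))"
proof -
  let ?s = "\<lambda>e. real (sepc l J e)"
  let ?xF = "\<lambda>z. real (card {j\<in>J. j < l z})"
  let ?xc = "\<lambda>j z. if j < l z then 1 else (0::real)"
  have a: "eq ?xF e = (?s e)^2" if "e \<in> E" for e
  proof -
    have "card e = 2" using Eok that by auto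
    then obtain a b where e: "e = {a,b}" "a \<noteq> b" by (meson edge2)
    show ?thesis unfolding e by (rule eqF[OF e(2) fJ])
  qed
  have c: "(\<Sum>j\<in>J. eq (?xc j) e) = ?s e" if "e \<in> E" for e
  proof -
    have "card e = 2" using Eok that by auto
    then obtain a b where e: "e = {a,b}" "a \<noteq> b" by (meson edge2)
    show ?thesis unfolding e eqc[OF e(2)] sum_ind[OF fJ] sepc_def ..
  qed
  have b: "(?s e)^2 = ?s e" if "e \<in> EH" for e
  proof -
    have "card e = 2" using Eok that EHE by auto
    then obtain a b where e: "e = {a,b}" "a \<noteq> b" by (meson edge2)
    have ab: "{a,b} \<in> EH" using that e by simp
    then have ba: "{b,a} \<in> EH" by (simp add: insert_commute)
    have "sepc l J e \<le> 1" unfolding e by (rule sep_le1) (use lip ab ba in auto)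
    then have "sepc l J e = 0 \<or> sepc l J e = 1" by auto
    then show ?thesis by auto
  qed
  have "(1-eps) * (\<Sum>e\<in>E. (?s e)^2) = (1-eps) * (\<Sum>e\<in>E. eq ?xF e)"
    using a by simp
  also have "\<dots> \<le> (1-eps) * ((1+eps) * (\<Sum>e\<in>EH. w e * eq ?xF e))"
    using sp2 eps by (intro mult_left_mono) auto
  also have "(\<Sum>e\<in>EH. w e * eq ?xF e) = (\<Sum>e\<in>EH. w e * ?s e)"
    using a b EHE by (intro sum.cong refl) auto
  also have "\<dots> = (\<Sum>e\<in>EH. w e * (\<Sum>j\<in>J. eq (?xc j) e))"
    using c EHE by (intro sum.cong refl) auto
  also have "\<dots> = (\<Sum>j\<in>J. \<Sum>e\<in>EH. w e * eq (?xc j) e)"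
    unfolding sum_distrib_left by (rule sum.swap)
  also have "(1-eps) * ((1+eps) * \<dots>) = (1+eps) * (\<Sum>j\<in>J. (1-eps) * (\<Sum>e\<in>EH. w e * eq (?xc j) e))"
    by (simp add: sum_distrib_left mult_ac)
  also have "\<dots> \<le> (1+eps) * (\<Sum>j\<in>J. \<Sum>e\<in>E. eq (?xc j) e)"
    using sp1 eps by (intro mult_left_mono sum_mono) auto
  also have "(\<Sum>j\<in>J. \<Sum>e\<in>E. eq (?xc j) e) = (\<Sum>e\<in>E. \<Sum>j\<in>J. eq (?xc j) e)"
    by (rule sum.swap)
  also have "\<dots> = (\<Sum>e\<in>E. ?s e)"
    using c by simp
  finally show ?thesis .
qed

end

lemma card_UN_img_le:
  assumes "finite V" "\<And>a. a \<in> V \<Longrightarrow> finite (B a)" "\<And>a. a \<in> V \<Longrightarrow> real (card (B a)) \<le> T"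
  shows "real (card (\<Union>x\<in>V. f x ` B x)) \<le> real (card V) * T"
proof -
  have "card (\<Union>x\<in>V. f x ` B x) \<le> (\<Sum>x\<in>V. card (f x ` B x))"
    by (rule card_UN_le[OF assms(1)])
  also have "\<dots> \<le> (\<Sum>x\<in>V. card (B x))"
    by (intro sum_mono card_image_le assms(2))
  finally have "real (card (\<Union>x\<in>V. f x ` B x)) \<le> (\<Sum>x\<in>V. real (card (B x)))"
    by (metis of_nat_le_iff of_nat_sum)
  also have "\<dots> \<le> (\<Sum>x\<in>V. T)" by (intro sum_mono assms(3))
  finally show ?thesis by simp
qed

lemma count_N1:
  assumes fV: "finite V" and Eok: "\<forall>e\<in>E. e \<subseteq> V \<and> card e = 2" and T: "0 \<le> T"
  shows "real (card {e\<in>E. sepc l (Jset V l T K) e = 1}) \<le> 2 * real (card V) * T"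
proof -
  let ?J = "Jset V l T K"
  let ?S1 = "\<Union>x\<in>V. (\<lambda>y. {x,y}) ` Ba V l ?J x"
  let ?S2 = "\<Union>y\<in>V. (\<lambda>x. {x,y}) ` Ab V l ?J y"
  have sub: "{e\<in>E. sepc l ?J e = 1} \<subseteq> ?S1 \<union> ?S2"
  proof
    fix e assume "e \<in> {e\<in>E. sepc l ?J e = 1}"
    then have eE: "e \<in> E" and s: "sepc l ?J e = 1" by auto
    have "card e = 2" using Eok eE by auto
    then obtain a b where e: "e = {a,b}" "a \<noteq> b" by (meson edge2)
    have "e \<subseteq> V" using Eok eE by auto
    then have V: "a \<in> V" "b \<in> V" using e by auto
    show "e \<in> ?S1 \<union> ?S2"
    proof (cases "l a \<le> l b")
      case True
      show ?thesis unfolding e by (rule cover_ord[OF e(2) V True]) (use s e in simp)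
    next
      case False
      have eba: "e = {b,a}" using e by (simp add: insert_commute)
      have "l b \<le> l a" using False by simp
      then show ?thesis unfolding eba using e(2) V s eba by (intro cover_ord) auto
    qed
  qed
  have finBa: "finite (Ba V l ?J x)" for x
    by (rule finite_subset[OF _ fV]) (auto simp: Ba_def)
  have finAb: "finite (Ab V l ?J x)" for x
    by (rule finite_subset[OF _ fV]) (auto simp: Ab_def)
  have f1: "finite ?S1" using fV finBa by auto
  have f2: "finite ?S2" using fV finAb by auto
  have c1: "real (card ?S1) \<le> real (card V) * T"
    by (rule card_UN_img_le[OF fV finBa card_Ba[OF fV T]])
  have c2: "real (card ?S2) \<le> real (card V) * T"
    by (rule card_UN_img_le[OF fV finAb card_Ab[OF fV T]])
  have "card {e\<in>E. sepc l ?J e = 1} \<le> card (?S1 \<union> ?S2)"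
    by (rule card_mono[OF _ sub]) (use f1 f2 in simp)
  also have "\<dots> \<le> card ?S1 + card ?S2" by (rule card_Un_le)
  finally have "real (card {e\<in>E. sepc l ?J e = 1}) \<le> real (card ?S1) + real (card ?S2)"
    by linarith
  then show ?thesis using c1 c2 by linarith
qed

lemma J_size:
  assumes fV: "finite V" and T: "0 < T"
  shows "real K \<le> real (card (Jset V l T K)) + 2 + 3 * (real (card V) / T)"
proof -
  let ?J = "Jset V l T K"
  let ?L = "Lset V l T"
  define Hv where "Hv = {i. T < real (card (layer V l i))}"
  have L_iff: "i \<in> ?L \<longleftrightarrow> i \<notin> Hv" for i unfolding Lset_def Hv_def by auto
  have HvV: "Hv \<subseteq> l ` V"
  proof
    fix i assume "i \<in> Hv"
    then have "card (layer V l i) > 0" using T unfolding Hv_def by auto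
    then have "layer V l i \<noteq> {}" by auto
    then obtain a where "a \<in> V" "l a = i" unfolding layer_def by auto
    then show "i \<in> l ` V" by auto
  qed
  have fH: "finite Hv" using HvV fV finite_surj by blast
  have flay: "finite (layer V l i)" for i using fV unfolding layer_def by simp
  have "card (\<Union>i\<in>Hv. layer V l i) = (\<Sum>i\<in>Hv. card (layer V l i))"
    by (rule card_UN_disjoint[OF fH]) (auto simp: fV layer_def)
  moreover have "card (\<Union>i\<in>Hv. layer V l i) \<le> card V"
    by (rule card_mono[OF fV]) (auto simp: layer_def)
  ultimately have s1: "(\<Sum>i\<in>Hv. real (card (layer V l i))) \<le> real (card V)"
    by (metis of_nat_le_iff of_nat_sum)
  have "real (card Hv) * T = (\<Sum>i\<in>Hv. T)" by simp
  also have "\<dots> \<le> (\<Sum>i\<in>Hv. real (card (layer V l i)))"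
    by (rule sum_mono) (simp add: Hv_def less_imp_le)
  finally have "real (card Hv) * T \<le> real (card V)" using s1 by linarith
  then have cH: "real (card Hv) \<le> real (card V) / T" using T by (simp add: pos_le_divide_eq)
  have cov: "{..<K} \<subseteq> ?J \<union> {0, K - 1} \<union> Hv \<union> (\<lambda>i. i - 1) ` Hv \<union> (\<lambda>i. i - 2) ` Hv"
  proof
    fix j assume jK: "j \<in> {..<K}"
    show "j \<in> ?J \<union> {0, K - 1} \<union> Hv \<union> (\<lambda>i. i - 1) ` Hv \<union> (\<lambda>i. i - 2) ` Hv"
    proof (cases "j \<in> ?J")
      case True then show ?thesis by simp
    next
      case nJ: False
      show ?thesis
      proof (cases "j \<in> Hv")
        case True then show ?thesis by simp
      next
        case nH: False
        show ?thesis
        proof (cases "Suc j \<in> Hv")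
          case True
          have "j = (\<lambda>i. i - 1) (Suc j)" by simp
          then have "j \<in> (\<lambda>i. i - 1) ` Hv" using True by blast
          then show ?thesis by simp
        next
          case nH1: False
          show ?thesis
          proof (cases "j = 0 \<or> j = K - 1")
            case True then show ?thesis by auto
          next
            case False
            then have "Suc j < K" "0 < j" using jK by auto
            then have "Suc (Suc j) \<in> Hv"
              using nJ nH nH1 jK unfolding Jset_def L_iff by auto
            moreover have "j = (\<lambda>i. i - 2) (Suc (Suc j))" by simp
            ultimately have "j \<in> (\<lambda>i. i - 2) ` Hv" by blast
            then show ?thesis by simp
          qed
        qed
      qed
    qed
  qed
  have "K = card {..<K}" by simp
  also have "\<dots> \<le> card (?J \<union> {0, K - 1} \<union> Hv \<union> (\<lambda>i. i - 1) ` Hv \<union> (\<lambda>i. i - 2) ` Hv)"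
    by (rule card_mono[OF _ cov]) (simp add: fH J_fin)
  also have "\<dots> \<le> card ?J + card {0, K - 1} + card Hv + card ((\<lambda>i. i - 1) ` Hv) + card ((\<lambda>i. i - 2) ` Hv)"
    by (meson add_le_mono card_Un_le le_refl order_trans)
  also have "\<dots> \<le> card ?J + 2 + card Hv + card Hv + card Hv"
    by (intro add_mono card_image_le fH le_refl) (simp add: card_insert_le_m1)
  finally have "real K \<le> real (card ?J) + 2 + 3 * real (card Hv)" by linarith
  then show ?thesis using cH by linarith
qed

lemma g_lower:
  fixes s :: nat and eps :: real
  assumes "0 < eps" "eps \<le> 1/18"
  shows "(1-eps) * (real s)^2 - (1+eps) * real s \<ge> - 2 * eps * (if s = 1 then 1 else 0)"
proof (cases "s = 0 \<or> s = 1")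
  case True then show ?thesis using assms by auto
next
  case False
  then have s2: "real s \<ge> 2" by auto
  have "(1-eps) * 2 \<le> (1-eps) * real s" using s2 assms by (intro mult_left_mono) auto
  moreover have "(1-eps) * 2 = 2 - 2 * eps" by simp
  ultimately have "(1-eps) * real s - (1+eps) \<ge> 0" using assms by linarith
  then have "real s * ((1-eps) * real s - (1+eps)) \<ge> 0" using s2 by simp
  then show ?thesis using False by (simp add: power2_eq_square algebra_simps)
qed

lemma arith18: "(a::real) - b - (a+b)/18 \<le> 4*c/18 \<Longrightarrow> 17*a - 19*b \<le> 4*c"
  by (simp add: field_simps)

lemma final_arith:
  fixes m K T eps :: real
  assumes "0 < eps" "eps \<le> 1/18" "1 \<le> T" "0 \<le> m"
    and g: "(1-eps) * m^2 - (1+eps) * m \<le> 4 * eps * T^4"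
    and K: "K \<le> m + 2 + 3 * T^2"
  shows "K \<le> 9 * T^2"
proof -
  have "eps * (m^2 + m) \<le> (1/18) * (m^2 + m)" using assms by (intro mult_right_mono) auto
  moreover have "(1-eps) * m^2 - (1+eps) * m = m^2 - m - eps * (m^2 + m)" by (simp add: algebra_simps)
  ultimately have h: "(1-eps) * m^2 - (1+eps) * m \<ge> m^2 - m - (m^2 + m) / 18" by linarith
  have "4 * eps * T^4 \<le> 4 * T^4 / 18" using assms by (simp add: mult_right_mono)
  then have A: "m^2 - m - (m^2 + m) / 18 \<le> 4 * T^4 / 18" using g h by (meson order_trans)
  then have "17 * m^2 - 19 * m \<le> 4 * T^4" by (rule arith18)
  have m: "m \<le> T^2 + 2"
  proof (rule ccontr)
    assume "\<not> m \<le> T^2 + 2"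
    then have "m > T^2 + 2" by simp
    have t0: "0 \<le> T^2" by simp
    have m0: "0 < m" using \<open>m > T^2 + 2\<close> t0 by linarith
    have h2: "17 * T^2 + 15 < 17 * m - 19" using \<open>m > T^2 + 2\<close> by linarith
    have c0: "0 \<le> 17 * T^2 + 15" using t0 by linarith
    have X: "m * (17 * m - 19) > (T^2 + 2) * (17 * T^2 + 15)"
      by (rule mult_strict_mono[OF \<open>m > T^2 + 2\<close> h2 m0 c0])
    have Y: "(T^2 + 2) * (17 * T^2 + 15) \<ge> 4 * T^4"
    proof -
      have e: "(T^2 + 2) * (17 * T^2 + 15) = 17 * T^4 + 49 * T^2 + 30"
        by (simp add: algebra_simps power4_eq_xxxx power2_eq_square)
      have "0 \<le> T^4" by simp
      then show ?thesis unfolding e using t0 by linarith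
    qed
    have Z: "m * (17 * m - 19) = 17 * m^2 - 19 * m" by (simp add: algebra_simps power2_eq_square)
    show False using X Y Z \<open>17 * m^2 - 19 * m \<le> 4 * T^4\<close> by linarith
  qed
  have "1 \<le> T^2" using assms by (simp add: one_le_power)
  then show ?thesis using m K by linarith
qed

lemma level_bound:
  fixes V :: "'a set" and E EH w eps and l :: "'a \<Rightarrow> nat"
  assumes fV: "finite V" and Eok: "\<forall>e\<in>E. e \<subseteq> V \<and> card e = 2" and EHE: "EH \<subseteq> E"
    and sp1: "\<And>x. (1-eps) * (\<Sum>e\<in>EH. w e * eq x e) \<le> (\<Sum>e\<in>E. eq x e)"
    and sp2: "\<And>x. (\<Sum>e\<in>E. eq x e) \<le> (1+eps) * (\<Sum>e\<in>EH. w e * eq x e)"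
    and lip: "\<And>a b. {a,b} \<in> EH \<Longrightarrow> l b \<le> l a + 1"
    and eps0: "0 < eps" and eps1: "eps \<le> 1/18"
    and uvE: "{u,v} \<in> E" and uv: "u \<noteq> v" and lu: "l u = 0" and Kv: "K \<le> l v"
  shows "real K \<le> 9 * real (card V) powr (2/3)"
proof -
  define n where "n = card V"
  have uV: "u \<in> V" using Eok uvE by auto
  have n1: "1 \<le> real n" unfolding n_def using uV fV card_0_eq[OF fV] by (cases "card V") auto
  define T where "T = real n powr (1/3)"
  have T1: "1 \<le> T" unfolding T_def using n1 by (simp add: ge_one_powr_ge_zero)
  have npos: "0 < real n" using n1 by simp
  have T3: "T^3 = real n"
  proof -
    have "T^3 = T powr (real 3)" using T1 by (simp add: powr_realpow)
    also have "\<dots> = real n" unfolding T_def powr_powr using npos by simp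
    finally show ?thesis .
  qed
  have T2: "T^2 = real n powr (2/3)"
  proof -
    have "T^2 = T powr (real 2)" using T1 by (simp add: powr_realpow)
    also have "\<dots> = real n powr (2/3)" unfolding T_def powr_powr by simp
    finally show ?thesis .
  qed
  define J where "J = Jset V l T K"
  have fJ: "finite J" unfolding J_def by (rule J_fin)
  have fE: "finite E" using Eok fV by (meson Pow_iff finite_Pow_iff rev_finite_subset subsetI)
  let ?s = "\<lambda>e. real (sepc l J e)"
  let ?g = "\<lambda>e. (1-eps) * (?s e)^2 - (1+eps) * ?s e"
  have MI: "(1-eps) * (\<Sum>e\<in>E. (?s e)^2) \<le> (1+eps) * (\<Sum>e\<in>E. ?s e)"
    by (rule main_ineq[OF fV Eok EHE sp1 sp2 lip eps0 eps1 fJ])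
  have sumg: "(\<Sum>e\<in>E. ?g e) \<le> 0"
    using MI by (simp add: sum_subtractf sum_distrib_left)
  have suv: "sepc l J {u,v} = card J"
  proof -
    have "{j\<in>J. l u \<le> j \<and> j < l v} = J"
      using J_sub[of V l T K] Kv lu unfolding J_def by auto
    then show ?thesis unfolding sepc_def using sep_set[of l u v J] lu by simp
  qed
  have r1: "(\<Sum>e\<in>E. ?g e) = ?g {u,v} + (\<Sum>e\<in>E - {{u,v}}. ?g e)"
    by (rule sum.remove[OF fE uvE])
  have r2: "(\<Sum>e\<in>E - {{u,v}}. ?g e) \<ge> (\<Sum>e\<in>E - {{u,v}}. - 2 * eps * (if sepc l J e = 1 then 1 else 0))"
    by (intro sum_mono g_lower eps0 eps1)
  have r3: "(\<Sum>e\<in>E - {{u,v}}. - 2 * eps * (if sepc l J e = 1 then 1 else 0))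
      = - 2 * eps * real (card {e\<in>E - {{u,v}}. sepc l J e = 1})"
  proof -
    have "(\<Sum>e\<in>E - {{u,v}}. - 2 * eps * (if sepc l J e = 1 then 1 else 0))
      = - 2 * eps * (\<Sum>e\<in>E - {{u,v}}. (if sepc l J e = 1 then 1 else 0))"
      by (rule sum_distrib_left[symmetric])
    also have "(\<Sum>e\<in>E - {{u,v}}. (if sepc l J e = 1 then 1 else 0)) = real (card {e\<in>E - {{u,v}}. sepc l J e = 1})"
      by (rule sum_ind) (use fE in simp)
    finally show ?thesis .
  qed
  have r4: "card {e\<in>E - {{u,v}}. sepc l J e = 1} \<le> card {e\<in>E. sepc l J e = 1}"
    by (rule card_mono) (use fE in auto)
  have r5: "real (card {e\<in>E. sepc l J e = 1}) \<le> 2 * real n * T"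
    unfolding J_def n_def by (rule count_N1[OF fV Eok]) (use T1 in simp)
  have r6: "2 * eps * real (card {e\<in>E - {{u,v}}. sepc l J e = 1}) \<le> 2 * eps * (2 * real n * T)"
    using r4 r5 eps0 by (intro mult_left_mono) auto
  have gm: "?g {u,v} \<le> 4 * eps * (real n * T)"
    using r1 r2 r3 r6 sumg by linarith
  have "T^4 = T^3 * T" by (simp add: power4_eq_xxxx power3_eq_cube)
  then have nT: "real n * T = T^4" using T3 by simp
  have gm2: "(1-eps) * (real (card J))^2 - (1+eps) * real (card J) \<le> 4 * eps * T^4"
    using gm suv nT by simp
  have JS: "real K \<le> real (card J) + 2 + 3 * (real n / T)"
    unfolding J_def n_def by (rule J_size[OF fV]) (use T1 in simp)
  have "T^3 = T^2 * T" by (simp add: power2_eq_square power3_eq_cube)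
  then have "real n / T = T^2" using T3 T1 by simp
  then have "real K \<le> real (card J) + 2 + 3 * T^2" using JS by simp
  then have "real K \<le> 9 * T^2" by (rule final_arith[OF eps0 eps1 T1 _ gm2, rotated]) simp
  then show ?thesis using T2 n_def by simp
qed

lemma walk_single: "is_walk E [x]" unfolding is_walk_def by simp

lemma walk_tail: "is_walk E (x # rest) \<Longrightarrow> rest \<noteq> [] \<Longrightarrow> is_walk E rest"
  unfolding is_walk_def
proof (intro conjI allI impI)
  fix i assume w: "x # rest \<noteq> [] \<and> (\<forall>i. Suc i < length (x # rest) \<longrightarrow> {(x # rest) ! i, (x # rest) ! Suc i} \<in> E)"
    and "Suc i < length rest"
  then have "Suc (Suc i) < length (x # rest)" by simp
  then have "{(x # rest) ! Suc i, (x # rest) ! Suc (Suc i)} \<in> E" by (rule w[THEN conjunct2, rule_format])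
  then show "{rest ! i, rest ! Suc i} \<in> E" by simp
qed

lemma walk_first: "is_walk E (x # y # rest) \<Longrightarrow> {x, y} \<in> E"
  unfolding is_walk_def by force

lemma walk_append:
  assumes wx: "is_walk E xs" and wy: "is_walk E ys" and h: "last xs = hd ys"
  shows "is_walk E (xs @ tl ys)"
  unfolding is_walk_def
proof (intro conjI allI impI)
  have xs: "xs \<noteq> []" using wx unfolding is_walk_def by simp
  have ys: "ys \<noteq> []" using wy unfolding is_walk_def by simp
  show "xs @ tl ys \<noteq> []" using xs by simp
  obtain y0 ys' where ysc: "ys = y0 # ys'" using ys by (cases ys) auto
  fix i assume i: "Suc i < length (xs @ tl ys)"
  show "{(xs @ tl ys) ! i, (xs @ tl ys) ! Suc i} \<in> E"
  proof (cases "Suc i < length xs")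
    case True
    then show ?thesis using wx unfolding is_walk_def by (simp add: nth_append)
  next
    case False
    show ?thesis
    proof (cases "Suc i = length xs")
      case True
      have li: "i = length xs - 1" using True by simp
      have a: "(xs @ tl ys) ! i = ys ! 0"
        using True xs h by (simp add: nth_append last_conv_nth hd_conv_nth[OF ys] li)
      have b: "(xs @ tl ys) ! Suc i = ys ! Suc 0"
        using True by (simp add: nth_append ysc)
      have "Suc 0 < length ys" using i True by simp
      then have "{ys ! 0, ys ! Suc 0} \<in> E" using wy unfolding is_walk_def by blast
      then show ?thesis using a b by simp
    next
      case False2: False
      define k where "k = i - length xs"
      have ik: "i = length xs + k" using False False2 k_def by simp
      have a: "(xs @ tl ys) ! i = ys ! Suc k" using ik by (simp add: nth_append ysc)
      have b: "(xs @ tl ys) ! Suc i = ys ! Suc (Suc k)" using ik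
        by (simp add: nth_append ysc)
      have "Suc (Suc k) < length ys" using i ik by simp
      then have "{ys ! Suc k, ys ! Suc (Suc k)} \<in> E" using wy unfolding is_walk_def by blast
      then show ?thesis using a b by simp
    qed
  qed
qed

lemma append_hd_last:
  assumes "xs \<noteq> []" "ys \<noteq> []" "last xs = hd ys"
  shows "hd (xs @ tl ys) = hd xs" "last (xs @ tl ys) = last ys" "length (xs @ tl ys) = length xs + length ys - 1"
proof -
  show "hd (xs @ tl ys) = hd xs" using assms by simp
  show "last (xs @ tl ys) = last ys"
  proof (cases "tl ys = []")
    case True
    then have "ys = [hd ys]" using assms(2) by (cases ys) auto
    then show ?thesis using True assms by (metis append_Nil2 last_ConsL)
  next
    case False
    then show ?thesis using assms(2) by (cases ys) auto
  qed
  show "length (xs @ tl ys) = length xs + length ys - 1" using assms by (cases ys) auto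
qed

lemma walk_lift:
  assumes edge: "\<And>x y. {x,y} \<in> E \<Longrightarrow> \<exists>zs. is_walk EH zs \<and> hd zs = x \<and> last zs = y \<and> length zs \<le> B + 1"
  shows "is_walk E ys \<Longrightarrow> \<exists>zs. is_walk EH zs \<and> hd zs = hd ys \<and> last zs = last ys \<and> length zs \<le> B * (length ys - 1) + 1"
proof (induction ys)
  case Nil
  then show ?case unfolding is_walk_def by simp
next
  case (Cons x rest)
  show ?case
  proof (cases rest)
    case Nil
    then show ?thesis using walk_single[of EH x] by (intro exI[of _ "[x]"]) simp
  next
    case (Cons y rest')
    have wr: "is_walk E rest" using Cons.prems Cons by (intro walk_tail[of E x rest]) simp_all
    obtain zs2 where z2: "is_walk EH zs2" "hd zs2 = hd rest" "last zs2 = last rest"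
        "length zs2 \<le> B * (length rest - 1) + 1"
      using Cons.IH[OF wr] by blast
    have "{x,y} \<in> E" using Cons.prems Cons by (intro walk_first[of E x y rest']) simp
    then obtain zs1 where z1: "is_walk EH zs1" "hd zs1 = x" "last zs1 = y" "length zs1 \<le> B + 1"
      using edge by blast
    have ne1: "zs1 \<noteq> []" using z1 unfolding is_walk_def by simp
    have ne2: "zs2 \<noteq> []" using z2 unfolding is_walk_def by simp
    have hl: "last zs1 = hd zs2" using z1 z2 Cons by simp
    note ah = append_hd_last[OF ne1 ne2 hl]
    have "is_walk EH (zs1 @ tl zs2)" by (rule walk_append[OF z1(1) z2(1) hl])
    moreover have "hd (zs1 @ tl zs2) = hd (x # rest)" using ah z1 by simp
    moreover have "last (zs1 @ tl zs2) = last (x # rest)" using ah z2 Cons by simp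
    moreover have "length (zs1 @ tl zs2) \<le> B * (length (x # rest) - 1) + 1"
    proof -
      have "B * length rest = B + B * (length rest - 1)" using Cons by simp
      then show ?thesis using ah z1 z2 by simp
    qed
    ultimately show ?thesis by blast
  qed
qed

definition reach :: "'a set set \<Rightarrow> 'a \<Rightarrow> 'a \<Rightarrow> nat \<Rightarrow> bool" where
  "reach EH u a k \<longleftrightarrow> (\<exists>xs. is_walk EH xs \<and> hd xs = u \<and> last xs = a \<and> length xs \<le> k + 1)"

definition lev :: "'a set set \<Rightarrow> 'a \<Rightarrow> nat \<Rightarrow> 'a \<Rightarrow> nat" where
  "lev EH u K a = (LEAST k. k = K \<or> reach EH u a k)"

lemma lev_le: "lev EH u K a \<le> K"
  unfolding lev_def by (rule Least_le) simp

lemma lev_spec: "lev EH u K a = K \<or> reach EH u a (lev EH u K a)"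
  unfolding lev_def by (rule LeastI[of _ K]) simp

lemma lev_u: "lev EH u K u = 0"
proof -
  have "reach EH u u 0" unfolding reach_def using walk_single[of EH u]
    by (intro exI[of _ "[u]"]) simp
  then show ?thesis unfolding lev_def by (intro Least_eq_0) simp
qed

lemma lev_lip:
  assumes ab: "{a,b} \<in> EH"
  shows "lev EH u K b \<le> lev EH u K a + 1"
proof (cases "lev EH u K a = K")
  case True
  then show ?thesis using lev_le[of EH u K b] by simp
next
  case False
  then have "reach EH u a (lev EH u K a)" using lev_spec[of EH u K a] by simp
  then obtain xs where xs: "is_walk EH xs" "hd xs = u" "last xs = a" "length xs \<le> lev EH u K a + 1"
    unfolding reach_def by blast
  have wab: "is_walk EH [a,b]" unfolding is_walk_def using ab by auto
  have ne: "xs \<noteq> []" using xs unfolding is_walk_def by simp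
  have hl: "last xs = hd [a,b]" using xs by simp
  note ah = append_hd_last[OF ne _ hl]
  have "is_walk EH (xs @ tl [a,b])" by (rule walk_append[OF xs(1) wab hl])
  moreover have "hd (xs @ tl [a,b]) = u" "last (xs @ tl [a,b]) = b"
    "length (xs @ tl [a,b]) \<le> (lev EH u K a + 1) + 1"
    using ah xs by simp_all
  ultimately have "reach EH u b (lev EH u K a + 1)" unfolding reach_def by blast
  then show ?thesis unfolding lev_def by (intro Least_le) simp
qed

lemma edge_walk:
  assumes sg: "simple_graph V E" and eps0: "0 < eps" and eps1: "eps \<le> 1/18"
    and ss: "spectral_sparsifier eps V E EH w" and xy: "{x,y} \<in> E"
  shows "\<exists>zs. is_walk EH zs \<and> hd zs = x \<and> last zs = y \<and>
           length zs \<le> nat \<lfloor>9 * real (card V) powr (2/3)\<rfloor> + 1"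
proof -
  have fV: "finite V" and Eok: "\<forall>e\<in>E. e \<subseteq> V \<and> card e = 2"
    using sg unfolding simple_graph_def by auto
  have EHE: "EH \<subseteq> E" using ss unfolding spectral_sparsifier_def by auto
  have EHok: "\<forall>e\<in>EH. e \<subseteq> V \<and> card e = 2" using Eok EHE by auto
  have l1: "loewner_le V (\<lambda>u v. (1 - eps) * laplacian EH w u v) (laplacian E (\<lambda>_. 1))"
   and l2: "loewner_le V (laplacian E (\<lambda>_. 1)) (\<lambda>u v. (1 + eps) * laplacian EH w u v)"
    using ss unfolding spectral_sparsifier_def by auto
  have sp1: "(1-eps) * (\<Sum>e\<in>EH. w e * eq z e) \<le> (\<Sum>e\<in>E. eq z e)" for z
  proof -
    have "quad_form V (\<lambda>u v. (1 - eps) * laplacian EH w u v) z \<le> quad_form V (laplacian E (\<lambda>_. 1)) z"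
      using l1 unfolding loewner_le_def by blast
    then show ?thesis unfolding quad_form_scale quad_lap[OF fV EHok] quad_lap[OF fV Eok] by simp
  qed
  have sp2: "(\<Sum>e\<in>E. eq z e) \<le> (1+eps) * (\<Sum>e\<in>EH. w e * eq z e)" for z
  proof -
    have "quad_form V (laplacian E (\<lambda>_. 1)) z \<le> quad_form V (\<lambda>u v. (1 + eps) * laplacian EH w u v) z"
      using l2 unfolding loewner_le_def by blast
    then show ?thesis unfolding quad_form_scale quad_lap[OF fV EHok] quad_lap[OF fV Eok] by simp
  qed
  have "card {x,y} = 2" using Eok xy by blast
  then have xy_ne: "x \<noteq> y" by (cases "x = y") auto
  define B where "B = nat \<lfloor>9 * real (card V) powr (2/3)\<rfloor>"
  define K where "K = B + 1"
  let ?l = "lev EH x K"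
  show ?thesis
  proof (cases "?l y < K")
    case True
    then have "reach EH x y (?l y)" using lev_spec[of EH x K y] by simp
    then obtain zs where "is_walk EH zs" "hd zs = x" "last zs = y" "length zs \<le> ?l y + 1"
      unfolding reach_def by blast
    then show ?thesis using True unfolding K_def B_def by (intro exI[of _ zs]) simp
  next
    case nlt: False
    have lvK: "K \<le> lev EH x K y" using nlt by simp
    have "real K \<le> 9 * real (card V) powr (2/3)"
      by (rule level_bound[where u=x and v=y and K=K and l="lev EH x K", OF fV Eok EHE sp1 sp2 lev_lip[of _ _ EH x K] eps0 eps1 xy xy_ne lev_u[of EH x K] lvK])
    moreover have "9 * real (card V) powr (2/3) < real K"
    proof -
      have "9 * real (card V) powr (2/3) < real_of_int \<lfloor>9 * real (card V) powr (2/3)\<rfloor> + 1"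
        by linarith
      also have "real_of_int \<lfloor>9 * real (card V) powr (2/3)\<rfloor> = real B"
        unfolding B_def by simp
      finally show ?thesis unfolding K_def by simp
    qed
    ultimately show ?thesis by linarith
  qed
qed

lemma dist_attained:
  assumes "S \<noteq> {}" "S = {xs. is_walk E xs \<and> hd xs = u \<and> last xs = v}"
  shows "\<exists>ys\<in>S. graph_dist E u v = ereal (real (length ys - 1))"
proof -
  obtain x where "x \<in> S" using assms by auto
  then obtain ys where ys: "ys \<in> S" "\<forall>z. z \<in> S \<longrightarrow> length ys \<le> length z"
    using ex_has_least_nat[of "\<lambda>z. z \<in> S" x length] by blast
  have "graph_dist E u v = (INF xs\<in>S. ereal (real (length xs - 1)))"
    unfolding graph_dist_def assms(2) ..
  also have "\<dots> = ereal (real (length ys - 1))"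
  proof (rule antisym)
    show "(INF xs\<in>S. ereal (real (length xs - 1))) \<le> ereal (real (length ys - 1))"
      by (rule INF_lower[OF ys(1)])
    show "ereal (real (length ys - 1)) \<le> (INF xs\<in>S. ereal (real (length xs - 1)))"
    proof (rule INF_greatest)
      fix z assume "z \<in> S"
      then have "length ys \<le> length z" using ys by blast
      then show "ereal (real (length ys - 1)) \<le> ereal (real (length z - 1))" by simp
    qed
  qed
  finally show ?thesis using ys(1) by blast
qed

lemma main_spanner:
  fixes V :: "'a set" and eps :: real
  assumes sg: "simple_graph V E" and eps0: "0 < eps" and eps1: "eps \<le> 1/18"
    and ss: "spectral_sparsifier eps V E EH w"
  shows "is_spanner (9 * real (card V) powr (2/3)) V E EH"
proof -
  have fV: "finite V" using sg unfolding simple_graph_def by auto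
  have EHE: "EH \<subseteq> E" using ss unfolding spectral_sparsifier_def by auto
  define P where "P = 9 * real (card V) powr (2/3)"
  define B where "B = nat \<lfloor>9 * real (card V) powr (2/3)\<rfloor>"
  have BP: "real B \<le> P" unfolding B_def P_def by simp
  have edge: "\<And>x y. {x,y} \<in> E \<Longrightarrow> \<exists>zs. is_walk EH zs \<and> hd zs = x \<and> last zs = y \<and> length zs \<le> B + 1"
    unfolding B_def by (rule edge_walk[OF sg eps0 eps1 ss])
  show ?thesis
    unfolding P_def[symmetric] is_spanner_def
  proof (intro conjI ballI)
    show "EH \<subseteq> E" by (rule EHE)
    fix u v assume uV: "u \<in> V" and vV: "v \<in> V"
    have "card V > 0" using uV fV card_gt_0_iff by blast
    then have Ppos: "P > 0" unfolding P_def by simp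
    define S where "S = {xs. is_walk E xs \<and> hd xs = u \<and> last xs = v}"
    show "graph_dist EH u v \<le> ereal P * graph_dist E u v"
    proof (cases "S = {}")
      case True
      then have "graph_dist E u v = \<infinity>" unfolding graph_dist_def S_def[symmetric] by (simp add: top_ereal_def)
      then show ?thesis using Ppos by simp
    next
      case False
      obtain ys where ys: "ys \<in> S" "graph_dist E u v = ereal (real (length ys - 1))"
        using dist_attained[OF False S_def] by blast
      have wys: "is_walk E ys" "hd ys = u" "last ys = v" using ys(1) unfolding S_def by auto
      obtain zs where zs: "is_walk EH zs" "hd zs = u" "last zs = v" "length zs \<le> B * (length ys - 1) + 1"
        using walk_lift[of E EH B ys, OF edge wys(1)] wys by auto
      have "graph_dist EH u v \<le> ereal (real (length zs - 1))"
        unfolding graph_dist_def using zs by (intro INF_lower) simp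
      also have "\<dots> \<le> ereal (real B * real (length ys - 1))"
      proof -
        have "length zs - 1 \<le> B * (length ys - 1)" using zs(4) by simp
        then have "real (length zs - 1) \<le> real (B * (length ys - 1))" by (simp only: of_nat_le_iff)
        then show ?thesis by simp
      qed
      also have "\<dots> \<le> ereal (P * real (length ys - 1))"
        using BP by (simp add: mult_right_mono)
      also have "\<dots> = ereal P * graph_dist E u v" using ys(2) by simp
      finally show ?thesis .
    qed
  qed
qed

theorem theorem1p1:
  shows "\<exists>(C::real) (k::nat). C > 0 \<and>
    (\<forall>(V::'a set) E EH w (eps::real).
       simple_graph V E \<and> 0 < eps \<and> eps \<le> 1/18 \<and> spectral_sparsifier eps V E EH w \<longrightarrow>
       is_spanner (C * real (card V) powr (2/3) * (ln (real (card V) + 2)) ^ k) V E EH)"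
proof (rule exI[of _ 9], rule exI[of _ 0], intro conjI allI impI)
  show "(0::real) < 9" by simp
next
  fix V :: "'a set" and E EH w and eps :: real
  assume "simple_graph V E \<and> 0 < eps \<and> eps \<le> 1/18 \<and> spectral_sparsifier eps V E EH w"
  then show "is_spanner (9 * real (card V) powr (2/3) * (ln (real (card V) + 2)) ^ 0) V E EH"
    using main_spanner[of V E eps EH w] by simp
qed

end
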